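(* Fix $\eta>0$, $\lambda\in\mathbb{R}^{2md}$, $e\in E$, $i\in e$, and let $\lambda'$ be obtained from $\lambda$ by replacing only the block $\lambda_{e,i}$ with $\lambda'_{e,i}(x)=\lambda_{e,i}(x)+\frac{1}{2\eta}\log\frac{S^\lambda_{e,i}(x)}{\mu^\lambda_i(x)}$ ($x\in\chi$). Then $$L(\lambda)-L(\lambda')\ \ge\ \frac{1}{4\eta}\|\nu^\lambda_{e,i}\|_1^2.$$
   Context: Let $G=(V,E)$ be a finite undirected graph with $n=|V|$, $m=|E|$, every vertex incident to at least one edge; $N_i=\{e\in E:i\in e\}$. $\chi$ is a finite label set with $d=|\chi|\ge2$. Costs $C_i\in\mathbb{R}^\chi$, $C_e\in\mathbb{R}^{\chi^2}$; for $e=\{i,j\}$, $x_e=(x_i,x_j)$ and $(x_e)_i=x_i$. Dual variables $\lambda=(\lambda_{e,i}(x))_{e\in E,i\in e,x\in\chi}\in\mathbb{R}^{2md}$ and $$L(\lambda)=\frac1\eta\sum_{i\in V}\log\sum_{x\in\chi}\exp\Big(-\eta C_i(x)+\eta\sum_{e\in N_i}\lambda_{e,i}(x)\Big)+\frac1\eta\sum_{e\in E}\log\sum_{x_e\in\chi^2}\exp\Big(-\eta C_e(x_e)-\eta\sum_{i\in e}\lambda_{e,i}((x_e)_i)\Big).$$ $\mu^\lambda_i(x)\propto\exp(-\eta C_i(x)+\eta\sum_{e\in N_i}\lambda_{e,i}(x))$, $\mu^\lambda_e(x_e)\propto\exp(-\eta C_e(x_e)-\eta\sum_{i\in e}\lambda_{e,i}((x_e)_i))$,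 each normalized to sum to $1$; $S^\lambda_{e,i}(x)=\sum_{x_e:(x_e)_i=x}\mu^\lambda_e(x_e)$; the slack vector is $\nu^\lambda_{e,i}=S^\lambda_{e,i}-\mu^\lambda_i\in\mathbb{R}^\chi$ (so $\partial L/\partial\lambda_{e,i}(x)=-\nu^\lambda_{e,i}(x)$). *)

theory Defs
  imports "HOL-Analysis.Analysis"
begin

text \<open>Graph: vertex set V, edges are 2-element subsets of V. Labels: a finite type 'x.
  A joint label x_e of edge e is a function e \<rightarrow> 'x (extensional), so (x_e)_i = x_e i.\<close>

definition graph_ok :: "'v set \<Rightarrow> 'v set set \<Rightarrow> bool" where
  "graph_ok V E \<longleftrightarrow> finite V \<and> (\<forall>e\<in>E. e \<subseteq> V \<and> card e = 2) \<and> (\<forall>i\<in>V. \<exists>e\<in>E. i \<in> e)"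

definition incident :: "'v set set \<Rightarrow> 'v \<Rightarrow> 'v set set" where
  "incident E i = {e\<in>E. i \<in> e}"

definition labelings :: "'v set \<Rightarrow> ('v \<Rightarrow> 'x) set" where
  "labelings e = PiE e (\<lambda>_. UNIV)"

definition node_pot :: "real \<Rightarrow> 'v set set \<Rightarrow> ('v \<Rightarrow> 'x \<Rightarrow> real)
    \<Rightarrow> ('v set \<Rightarrow> 'v \<Rightarrow> 'x \<Rightarrow> real) \<Rightarrow> 'v \<Rightarrow> 'x \<Rightarrow> real" where
  "node_pot \<eta> E Ci lam i x = exp (- \<eta> * Ci i x + \<eta> * (\<Sum>e\<in>incident E i. lam e i x))"

definition edge_pot :: "real \<Rightarrow> ('v set \<Rightarrow> ('v \<Rightarrow> 'x) \<Rightarrow> real)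
    \<Rightarrow> ('v set \<Rightarrow> 'v \<Rightarrow> 'x \<Rightarrow> real) \<Rightarrow> 'v set \<Rightarrow> ('v \<Rightarrow> 'x) \<Rightarrow> real" where
  "edge_pot \<eta> Ce lam e xe = exp (- \<eta> * Ce e xe - \<eta> * (\<Sum>i\<in>e. lam e i (xe i)))"

definition dualL :: "real \<Rightarrow> 'v set \<Rightarrow> 'v set set \<Rightarrow> ('v \<Rightarrow> 'x::finite \<Rightarrow> real)
    \<Rightarrow> ('v set \<Rightarrow> ('v \<Rightarrow> 'x) \<Rightarrow> real) \<Rightarrow> ('v set \<Rightarrow> 'v \<Rightarrow> 'x \<Rightarrow> real) \<Rightarrow> real" where
  "dualL \<eta> V E Ci Ce lam =
     (1/\<eta>) * (\<Sum>i\<in>V. ln (\<Sum>x\<in>UNIV. node_pot \<eta> E Ci lam i x))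
   + (1/\<eta>) * (\<Sum>e\<in>E. ln (\<Sum>xe\<in>labelings e. edge_pot \<eta> Ce lam e xe))"

definition mu_node :: "real \<Rightarrow> 'v set set \<Rightarrow> ('v \<Rightarrow> 'x::finite \<Rightarrow> real)
    \<Rightarrow> ('v set \<Rightarrow> 'v \<Rightarrow> 'x \<Rightarrow> real) \<Rightarrow> 'v \<Rightarrow> 'x \<Rightarrow> real" where
  "mu_node \<eta> E Ci lam i x = node_pot \<eta> E Ci lam i x / (\<Sum>y\<in>UNIV. node_pot \<eta> E Ci lam i y)"

definition mu_edge :: "real \<Rightarrow> ('v set \<Rightarrow> ('v \<Rightarrow> 'x) \<Rightarrow> real)
    \<Rightarrow> ('v set \<Rightarrow> 'v \<Rightarrow> 'x \<Rightarrow> real) \<Rightarrow> 'v set \<Rightarrow> ('v \<Rightarrow> 'x) \<Rightarrow> real" where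
  "mu_edge \<eta> Ce lam e xe = edge_pot \<eta> Ce lam e xe / (\<Sum>ye\<in>labelings e. edge_pot \<eta> Ce lam e ye)"

definition marg :: "real \<Rightarrow> ('v set \<Rightarrow> ('v \<Rightarrow> 'x) \<Rightarrow> real)
    \<Rightarrow> ('v set \<Rightarrow> 'v \<Rightarrow> 'x \<Rightarrow> real) \<Rightarrow> 'v set \<Rightarrow> 'v \<Rightarrow> 'x \<Rightarrow> real" where
  "marg \<eta> Ce lam e i x = (\<Sum>xe\<in>{xe\<in>labelings e. xe i = x}. mu_edge \<eta> Ce lam e xe)"

definition slack :: "real \<Rightarrow> 'v set set \<Rightarrow> ('v \<Rightarrow> 'x::finite \<Rightarrow> real)
    \<Rightarrow> ('v set \<Rightarrow> ('v \<Rightarrow> 'x) \<Rightarrow> real)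
    \<Rightarrow> ('v set \<Rightarrow> 'v \<Rightarrow> 'x \<Rightarrow> real) \<Rightarrow> 'v set \<Rightarrow> 'v \<Rightarrow> 'x \<Rightarrow> real" where
  "slack \<eta> E Ci Ce lam e i x = marg \<eta> Ce lam e i x - mu_node \<eta> E Ci lam i x"

end

theory Submission
  imports Defs
begin
lemma bhatt:
  fixes p q :: "'x::finite \<Rightarrow> real"
  assumes pp: "\<And>x. p x > 0" and qp: "\<And>x. q x > 0" and sp: "sum p UNIV = 1" and sq: "sum q UNIV = 1"
  shows "(\<Sum>x\<in>UNIV. \<bar>p x - q x\<bar>)\<^sup>2 \<le> -8 * ln (\<Sum>x\<in>UNIV. sqrt (p x * q x))"
proof -
  define B where "B = (\<Sum>x\<in>UNIV. sqrt (p x * q x))"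
  define a where "a x = sqrt (p x) - sqrt (q x)" for x
  define b where "b x = sqrt (p x) + sqrt (q x)" for x
  have sp2: "(sqrt (p x))\<^sup>2 = p x" "(sqrt (q x))\<^sup>2 = q x" "sqrt (p x) * sqrt (q x) = sqrt (p x * q x)" for x
    using pp[of x] qp[of x] by (auto simp: real_sqrt_mult)
  have ab: "\<bar>p x - q x\<bar> = \<bar>a x\<bar> * b x" for x
  proof -
    have "p x - q x = a x * b x" unfolding a_def b_def using sp2[of x]
      by (simp add: algebra_simps power2_eq_square)
    moreover have "b x \<ge> 0" unfolding b_def using pp[of x] qp[of x] by simp
    ultimately show ?thesis by (simp add: abs_mult)
  qed
  have CS: "(\<Sum>x\<in>UNIV. \<bar>a x\<bar> * b x)\<^sup>2 \<le> (\<Sum>x\<in>UNIV. (\<bar>a x\<bar>)\<^sup>2) * (\<Sum>x\<in>UNIV. (b x)\<^sup>2)"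
    by (rule Cauchy_Schwarz_ineq_sum)
  have a2: "(\<Sum>x\<in>UNIV. (\<bar>a x\<bar>)\<^sup>2) = 2 - 2 * B"
  proof -
    have "(\<Sum>x\<in>UNIV. (\<bar>a x\<bar>)\<^sup>2) = (\<Sum>x\<in>UNIV. p x + q x - 2 * sqrt (p x * q x))"
      by (rule sum.cong) (auto simp: a_def power2_diff sp2)
    also have "\<dots> = 2 - 2 * B" by (simp add: sum.distrib sum_subtractf sum_distrib_left sp sq B_def)
    finally show ?thesis .
  qed
  have b2: "(\<Sum>x\<in>UNIV. (b x)\<^sup>2) = 2 + 2 * B"
  proof -
    have "(\<Sum>x\<in>UNIV. (b x)\<^sup>2) = (\<Sum>x\<in>UNIV. p x + q x + 2 * sqrt (p x * q x))"
      by (rule sum.cong) (auto simp: b_def power2_sum sp2)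
    also have "\<dots> = 2 + 2 * B" by (simp add: sum.distrib sum_distrib_left sp sq B_def)
    finally show ?thesis .
  qed
  have Bpos: "B > 0" unfolding B_def
    by (rule sum_pos) (use pp qp in auto)
  have "0 \<le> (\<Sum>x\<in>UNIV. (\<bar>a x\<bar>)\<^sup>2)" by (rule sum_nonneg) simp
  hence B1: "B \<le> 1" using a2 by simp
  have "(\<Sum>x\<in>UNIV. \<bar>p x - q x\<bar>)\<^sup>2 \<le> (2 - 2*B) * (2 + 2*B)"
    using CS a2 b2 ab by simp
  also have "\<dots> \<le> 8 * (1 - B)" using B1 Bpos zero_le_power2[of "1 - B"] by (simp add: algebra_simps power2_eq_square)
  also have "\<dots> \<le> -8 * ln B" using ln_le_minus_one[OF Bpos] by simp
  finally show ?thesis by (simp add: B_def)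
qed

lemma sqrt_aux: "(a::real) > 0 \<Longrightarrow> b > 0 \<Longrightarrow> a * sqrt (b / a) = sqrt (b * a)"
proof -
  assume a: "a > 0" and b: "b > 0"
  have "a * sqrt (b/a) = (sqrt a * sqrt a) * (sqrt b / sqrt a)" using a by (simp add: real_sqrt_divide)
  also have "\<dots> = sqrt a * sqrt b" proof - have "sqrt a > 0" using a by simp thus ?thesis by (simp only: times_divide_eq_right mult.assoc nonzero_mult_div_cancel_left less_imp_neq[symmetric] divide_self_if) (simp add: field_simps del: real_sqrt_mult_self) qed
  also have "\<dots> = sqrt (b * a)" by (simp add: real_sqrt_mult)
  finally show ?thesis .
qed

lemma ring_eq: "(a::real) * x + a * y - (a * x' + a * y') = a * (x - x') + a * (y - y')"
  by (simp add: algebra_simps)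

lemma exp_half_ln: "y > 0 \<Longrightarrow> exp (ln y / 2) = sqrt y"
proof -
  assume y: "y > 0"
  have "exp (ln y / 2) = exp (ln (sqrt y))" using y by (simp add: ln_sqrt)
  also have "\<dots> = sqrt y" using y by simp
  finally show ?thesis .
qed

theorem lemma1:
  fixes V :: "'v set" and E :: "'v set set"
    and Ci :: "'v \<Rightarrow> 'x::finite \<Rightarrow> real" and Ce :: "'v set \<Rightarrow> ('v \<Rightarrow> 'x) \<Rightarrow> real"
    and lam :: "'v set \<Rightarrow> 'v \<Rightarrow> 'x \<Rightarrow> real" and \<eta> :: real and e :: "'v set" and i :: 'v
  assumes "graph_ok V E" and "CARD('x) \<ge> 2" and "\<eta> > 0" and "e \<in> E" and "i \<in> e"
  shows "dualL \<eta> V E Ci Ce lam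
         - dualL \<eta> V E Ci Ce
             (lam(e := (lam e)(i := (\<lambda>x. lam e i x
                + (1 / (2 * \<eta>)) * ln (marg \<eta> Ce lam e i x / mu_node \<eta> E Ci lam i x)))))
         \<ge> (1 / (4 * \<eta>)) * (\<Sum>x\<in>UNIV. \<bar>slack \<eta> E Ci Ce lam e i x\<bar>)\<^sup>2"
proof -
  note g = assms(1)[unfolded graph_ok_def]
  have finV: "finite V" using g by blast
  have eV: "e \<subseteq> V" and ce: "card e = 2" using g assms(4) by auto
  have fine: "finite e" using ce card.infinite by fastforce
  have iV: "i \<in> V" using eV assms(5) by auto
  have finE: "finite E" using finite_Pow_iff[of V] finV g
    by (meson PowI finite_subset subsetI)
  have finI: "finite (incident E j)" for j unfolding incident_def using finE by simp
  have eI: "e \<in> incident E i" unfolding incident_def using assms(4,5) by simp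
  have finL: "finite (labelings e :: ('v \<Rightarrow> 'x) set)" unfolding labelings_def using fine by (intro finite_PiE) auto
  define S where "S x = marg \<eta> Ce lam e i x" for x
  define mu where "mu x = mu_node \<eta> E Ci lam i x" for x
  define d where "d x = (1 / (2 * \<eta>)) * ln (S x / mu x)" for x
  define lam' where "lam' = lam(e := (lam e)(i := (\<lambda>x. lam e i x + d x)))"
  define Zi where "Zi = (\<Sum>y\<in>UNIV. node_pot \<eta> E Ci lam i y)"
  define Ze where "Ze = (\<Sum>ye\<in>labelings e. edge_pot \<eta> Ce lam e ye)"
  define B where "B = (\<Sum>x\<in>UNIV. sqrt (S x * mu x))"
  have npos: "node_pot \<eta> E Ci l j x > 0" for l j x unfolding node_pot_def by simp
  have epos: "edge_pot \<eta> Ce l e' xe > 0" for l e' xe unfolding edge_pot_def by simp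
  have Zipos: "Zi > 0" unfolding Zi_def by (rule sum_pos) (auto simp: npos)
  have wit: "restrict (\<lambda>_. x) e \<in> {xe\<in>labelings e. xe i = x}" for x :: 'x
    using assms(5) by (auto simp: labelings_def)
  have Lne: "labelings e \<noteq> ({} :: ('v \<Rightarrow> 'x) set)" using wit by blast
  have Zepos: "Ze > 0" unfolding Ze_def by (rule sum_pos) (use finL Lne epos in auto)
  have mupos: "mu x > 0" for x unfolding mu_def mu_node_def using npos Zipos Zi_def by simp
  have mus: "sum mu UNIV = 1" unfolding mu_def mu_node_def using Zipos Zi_def
    by (simp add: sum_divide_distrib[symmetric])
  have mepos: "mu_edge \<eta> Ce lam e xe > 0" for xe unfolding mu_edge_def using epos Zepos Ze_def by simp
  have Spos: "S x > 0" for x unfolding S_def marg_def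
    by (rule sum_pos2[OF _ wit]) (use finL mepos in \<open>auto intro: less_imp_le\<close>)
  have grp: "(\<Sum>x\<in>UNIV. \<Sum>xe\<in>{xe\<in>labelings e. xe i = x}. h xe) = (\<Sum>xe\<in>labelings e. h xe)" for h :: "('v \<Rightarrow> 'x) \<Rightarrow> real"
    using sum.group[OF finL, of "UNIV :: 'x set" "\<lambda>xe. xe i" h] by simp
  have Ss: "sum S UNIV = 1" unfolding S_def marg_def grp unfolding mu_edge_def using Zepos Ze_def
    by (simp add: sum_divide_distrib[symmetric])
  have ed: "exp (\<eta> * d x) = sqrt (S x / mu x)" for x
  proof -
    have h: "\<eta> * d x = ln (S x / mu x) / 2" unfolding d_def using assms(3) by simp
    show ?thesis unfolding h using exp_half_ln[of "S x / mu x"] Spos[of x] mupos[of x] by simp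
  qed
  have node_other: "node_pot \<eta> E Ci lam' j x = node_pot \<eta> E Ci lam j x" if "j \<noteq> i" for j x
  proof -
    have "(\<Sum>e'\<in>incident E j. lam' e' j x) = (\<Sum>e'\<in>incident E j. lam e' j x)"
      by (rule sum.cong) (use that in \<open>auto simp: lam'_def\<close>)
    thus ?thesis unfolding node_pot_def by simp
  qed
  have node_i: "node_pot \<eta> E Ci lam' i x = node_pot \<eta> E Ci lam i x * exp (\<eta> * d x)" for x
  proof -
    have "(\<Sum>e'\<in>incident E i. lam' e' i x) = (\<Sum>e'\<in>incident E i. lam e' i x + (if e' = e then d x else 0))"
      by (rule sum.cong) (auto simp: lam'_def)
    also have "\<dots> = (\<Sum>e'\<in>incident E i. lam e' i x) + d x"
      using finI eI by (simp add: sum.distrib)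
    finally have hs: "(\<Sum>e'\<in>incident E i. lam' e' i x) = (\<Sum>e'\<in>incident E i. lam e' i x) + d x" .
    have ar: "- \<eta> * Ci i x + \<eta> * ((\<Sum>e'\<in>incident E i. lam e' i x) + d x)
       = (- \<eta> * Ci i x + \<eta> * (\<Sum>e'\<in>incident E i. lam e' i x)) + \<eta> * d x" by (simp add: algebra_simps)
    show ?thesis by (simp only: node_pot_def hs ar exp_add)
  qed
  have Zi': "(\<Sum>y\<in>UNIV. node_pot \<eta> E Ci lam' i y) = Zi * B"
  proof -
    have "node_pot \<eta> E Ci lam' i x = Zi * sqrt (S x * mu x)" for x
    proof -
      have "node_pot \<eta> E Ci lam i x = Zi * mu x" unfolding mu_def mu_node_def Zi_def[symmetric]
        using Zipos by simp
      moreover have "mu x * sqrt (S x / mu x) = sqrt (S x * mu x)"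
        using mupos[of x] Spos[of x]
        by (rule sqrt_aux)
      ultimately show ?thesis using node_i ed by (simp add: mult.assoc)
    qed
    thus ?thesis unfolding B_def by (simp add: sum_distrib_left)
  qed
  have nodesum: "(\<Sum>j\<in>V. ln (\<Sum>x\<in>UNIV. node_pot \<eta> E Ci lam j x)) - (\<Sum>j\<in>V. ln (\<Sum>x\<in>UNIV. node_pot \<eta> E Ci lam' j x)) = - ln B"
  proof -
    have "(\<Sum>j\<in>V. ln (\<Sum>x\<in>UNIV. node_pot \<eta> E Ci lam j x)) - (\<Sum>j\<in>V. ln (\<Sum>x\<in>UNIV. node_pot \<eta> E Ci lam' j x))
       = (\<Sum>j\<in>V. ln (\<Sum>x\<in>UNIV. node_pot \<eta> E Ci lam j x) - ln (\<Sum>x\<in>UNIV. node_pot \<eta> E Ci lam' j x))"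
      by (simp add: sum_subtractf)
    also have "\<dots> = (\<Sum>j\<in>V. if j = i then - ln B else 0)"
    proof (rule sum.cong)
      fix j assume "j \<in> V"
      show "ln (\<Sum>x\<in>UNIV. node_pot \<eta> E Ci lam j x) - ln (\<Sum>x\<in>UNIV. node_pot \<eta> E Ci lam' j x) = (if j = i then - ln B else 0)"
      proof (cases "j = i")
        case True
        have Bpos: "B > 0" unfolding B_def by (rule sum_pos) (use Spos mupos in auto)
        show ?thesis unfolding True Zi' Zi_def[symmetric] using Zipos Bpos by (simp add: ln_mult)
      next
        case False
        have ee: "node_pot \<eta> E Ci lam' j = node_pot \<eta> E Ci lam j"
          by (rule ext) (rule node_other[OF False])
        show ?thesis unfolding ee by (simp only: diff_self if_not_P[OF False])
      qed
    qed simp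
    also have "\<dots> = - ln B" using finV iV by simp
    finally show ?thesis .
  qed
  have edge_other: "edge_pot \<eta> Ce lam' e' xe = edge_pot \<eta> Ce lam e' xe" if "e' \<noteq> e" for e' xe
    unfolding edge_pot_def lam'_def using that by simp
  have edge_e: "edge_pot \<eta> Ce lam' e xe = edge_pot \<eta> Ce lam e xe * sqrt (mu (xe i) / S (xe i))" for xe
  proof -
    have "(\<Sum>j\<in>e. lam' e j (xe j)) = (\<Sum>j\<in>e. lam e j (xe j) + (if j = i then d (xe i) else 0))"
      by (rule sum.cong) (auto simp: lam'_def)
    also have "\<dots> = (\<Sum>j\<in>e. lam e j (xe j)) + d (xe i)"
      using fine assms(5) by (simp add: sum.distrib)
    finally have hs: "(\<Sum>j\<in>e. lam' e j (xe j)) = (\<Sum>j\<in>e. lam e j (xe j)) + d (xe i)" .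
    have ar: "- \<eta> * Ce e xe - \<eta> * ((\<Sum>j\<in>e. lam e j (xe j)) + d (xe i))
       = (- \<eta> * Ce e xe - \<eta> * (\<Sum>j\<in>e. lam e j (xe j))) + - (\<eta> * d (xe i))" by (simp add: algebra_simps)
    have "edge_pot \<eta> Ce lam' e xe = edge_pot \<eta> Ce lam e xe * exp (- (\<eta> * d (xe i)))"
      by (simp only: edge_pot_def hs ar exp_add)
    also have "exp (- (\<eta> * d (xe i))) = sqrt (mu (xe i) / S (xe i))"
      by (simp add: exp_minus ed real_sqrt_divide)
    finally show ?thesis .
  qed
  have Ze': "(\<Sum>xe\<in>labelings e. edge_pot \<eta> Ce lam' e xe) = Ze * B"
  proof -
    have "(\<Sum>xe\<in>labelings e. edge_pot \<eta> Ce lam' e xe)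
        = (\<Sum>xe\<in>labelings e. Ze * (mu_edge \<eta> Ce lam e xe * sqrt (mu (xe i) / S (xe i))))"
      by (rule sum.cong) (use Zepos in \<open>auto simp: edge_e mu_edge_def Ze_def[symmetric]\<close>)
    also have "\<dots> = Ze * (\<Sum>x\<in>UNIV. \<Sum>xe\<in>{xe\<in>labelings e. xe i = x}. mu_edge \<eta> Ce lam e xe * sqrt (mu (xe i) / S (xe i)))"
      unfolding grp by (simp add: sum_distrib_left)
    also have "\<dots> = Ze * (\<Sum>x\<in>UNIV. S x * sqrt (mu x / S x))"
      unfolding S_def marg_def by (simp add: sum_distrib_right)
    also have "\<dots> = Ze * B" unfolding B_def
    proof -
      have "S x * sqrt (mu x / S x) = sqrt (S x * mu x)" for x
        using mupos[of x] Spos[of x]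
        using sqrt_aux[OF Spos[of x] mupos[of x]] by (simp add: mult.commute)
      thus "Ze * (\<Sum>x\<in>UNIV. S x * sqrt (mu x / S x)) = Ze * (\<Sum>x\<in>UNIV. sqrt (S x * mu x))" by simp
    qed
    finally show ?thesis .
  qed
  have Bpos: "B > 0" unfolding B_def by (rule sum_pos) (use Spos mupos in auto)
  have edgesum: "(\<Sum>e'\<in>E. ln (\<Sum>xe\<in>labelings e'. edge_pot \<eta> Ce lam e' xe)) - (\<Sum>e'\<in>E. ln (\<Sum>xe\<in>labelings e'. edge_pot \<eta> Ce lam' e' xe)) = - ln B"
  proof -
    have "(\<Sum>e'\<in>E. ln (\<Sum>xe\<in>labelings e'. edge_pot \<eta> Ce lam e' xe)) - (\<Sum>e'\<in>E. ln (\<Sum>xe\<in>labelings e'. edge_pot \<eta> Ce lam' e' xe))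
       = (\<Sum>e'\<in>E. ln (\<Sum>xe\<in>labelings e'. edge_pot \<eta> Ce lam e' xe) - ln (\<Sum>xe\<in>labelings e'. edge_pot \<eta> Ce lam' e' xe))"
      by (simp add: sum_subtractf)
    also have "\<dots> = (\<Sum>e'\<in>E. if e' = e then - ln B else 0)"
    proof (rule sum.cong)
      fix e' assume "e' \<in> E"
      show "ln (\<Sum>xe\<in>labelings e'. edge_pot \<eta> Ce lam e' xe) - ln (\<Sum>xe\<in>labelings e'. edge_pot \<eta> Ce lam' e' xe) = (if e' = e then - ln B else 0)"
      proof (cases "e' = e")
        case True
        show ?thesis unfolding True Ze' Ze_def[symmetric] using Zepos Bpos by (simp add: ln_mult)
      next
        case False
        have ee: "edge_pot \<eta> Ce lam' e' = edge_pot \<eta> Ce lam e'"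
          by (rule ext) (rule edge_other[OF False])
        show ?thesis unfolding ee by (simp only: diff_self if_not_P[OF False])
      qed
    qed simp
    also have "\<dots> = - ln B" using finE assms(4) by simp
    finally show ?thesis .
  qed
  have diff: "dualL \<eta> V E Ci Ce lam - dualL \<eta> V E Ci Ce lam' = - 2 * ln B / \<eta>"
  proof -
    have "dualL \<eta> V E Ci Ce lam - dualL \<eta> V E Ci Ce lam'
      = (1/\<eta>) * ((\<Sum>j\<in>V. ln (\<Sum>x\<in>UNIV. node_pot \<eta> E Ci lam j x)) - (\<Sum>j\<in>V. ln (\<Sum>x\<in>UNIV. node_pot \<eta> E Ci lam' j x)))
       + (1/\<eta>) * ((\<Sum>e'\<in>E. ln (\<Sum>xe\<in>labelings e'. edge_pot \<eta> Ce lam e' xe)) - (\<Sum>e'\<in>E. ln (\<Sum>xe\<in>labelings e'. edge_pot \<eta> Ce lam' e' xe)))"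
      unfolding dualL_def by (rule ring_eq)
    also have "\<dots> = - 2 * ln B / \<eta>" unfolding nodesum edgesum by simp
    finally show ?thesis .
  qed
  have bh: "(\<Sum>x\<in>UNIV. \<bar>S x - mu x\<bar>)\<^sup>2 \<le> -8 * ln B"
    unfolding B_def by (rule bhatt[OF Spos mupos Ss mus])
  have sl: "slack \<eta> E Ci Ce lam e i x = S x - mu x" for x
    unfolding slack_def S_def mu_def by simp
  have lam'eq: "lam(e := (lam e)(i := (\<lambda>x. lam e i x
                + (1 / (2 * \<eta>)) * ln (marg \<eta> Ce lam e i x / mu_node \<eta> E Ci lam i x)))) = lam'"
    unfolding lam'_def d_def S_def mu_def by simp
  have "(1 / (4 * \<eta>)) * (\<Sum>x\<in>UNIV. \<bar>S x - mu x\<bar>)\<^sup>2 \<le> (1 / (4 * \<eta>)) * (-8 * ln B)"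
    using bh assms(3) by (intro mult_left_mono) auto
  also have "\<dots> = - 2 * ln B / \<eta>" using assms(3) by simp
  finally show ?thesis unfolding lam'eq diff sl .
qed
end
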